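(* Let $p_1(\lambda),\dots,p_k(\lambda)$ be scalar complex polynomials such that their greatest common divisor $q(\lambda)=\gcd(p_1(\lambda),\dots,p_k(\lambda))$ has simple roots. Then there exists a generic set $\Omega\subseteq\mathbb C^k$ such that for all $s=(s_1,\dots,s_k)\in\Omega$ the roots of the polynomial $s_1p_1(\lambda)+\cdots+s_kp_k(\lambda)$ are simple.
   Context: The greatest common divisor of several polynomials is defined recursively via $\gcd(p_1,\dots,p_k)=\gcd(\gcd(p_1,\dots,p_{k-1}),p_k)$, unique up to a nonzero constant. A set $\Omega\subseteq\mathbb C^k$ is generic if its complement is contained in an algebraic set (common zero set of finitely many polynomials) that is not all of $\mathbb C^k$. *)

theory Defs
  imports "HOL-Analysis.Analysis" "HOL-Computational_Algebra.Polynomial_Factorial" "HOL-Computational_Algebra.Field_as_Ring"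
begin

text \<open>Polynomial functions on C^k, where C^k is rendered as complex^'n
  (k = CARD('n)): the smallest class containing constants and coordinate
  functions, closed under sums and products.\<close>
inductive polyfun :: "((complex^'n) \<Rightarrow> complex) \<Rightarrow> bool" where
  const: "polyfun (\<lambda>x. c)"
| coord: "polyfun (\<lambda>x. x $ i)"
| add: "polyfun f \<Longrightarrow> polyfun g \<Longrightarrow> polyfun (\<lambda>x. f x + g x)"
| mult: "polyfun f \<Longrightarrow> polyfun g \<Longrightarrow> polyfun (\<lambda>x. f x * g x)"

definition algebraic_set :: "(complex^'n) set \<Rightarrow> bool" where
  "algebraic_set A \<longleftrightarrow> (\<exists>F. finite F \<and> (\<forall>f\<in>F. polyfun f) \<and> A = {x. \<forall>f\<in>F. f x = 0})"

definition generic :: "(complex^'n) set \<Rightarrow> bool" where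
  "generic \<Omega> \<longleftrightarrow> (\<exists>A. algebraic_set A \<and> A \<noteq> UNIV \<and> - \<Omega> \<subseteq> A)"

end

theory Submission
  imports Defs "Subresultants.Subresultant_Gcd" "HOL-Computational_Algebra.Fundamental_Theorem_Algebra"
begin

no_notation vec_index (infixl \<open>$\<close> 100)
hide_const (open) Module.smult

definition DD :: "complex \<Rightarrow> complex poly \<Rightarrow> bool" where
  "DD a X \<longleftrightarrow> [:-a,1:]^2 dvd X"

lemma DD_iff: "DD a X \<longleftrightarrow> poly X a = 0 \<and> poly (pderiv X) a = 0"
proof (cases "X = 0")
  case True then show ?thesis by (simp add: DD_def)
next
  case X: False
  have o: "DD a X \<longleftrightarrow> 2 \<le> order a X" unfolding DD_def order_divides using X by simp
  show ?thesis
  proof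
    assume "DD a X"
    then have ge: "2 \<le> order a X" using o by simp
    then have r: "poly X a = 0" using X order_root by fastforce
    have "order a X = Suc (order a (pderiv X))" using order_pderiv[OF X r] .
    then have "order a (pderiv X) \<noteq> 0" using ge by simp
    then have "poly (pderiv X) a = 0" using order_root by blast
    with r show "poly X a = 0 \<and> poly (pderiv X) a = 0" by simp
  next
    assume h: "poly X a = 0 \<and> poly (pderiv X) a = 0"
    have e: "order a X = Suc (order a (pderiv X))" using order_pderiv[OF X] h by simp
    show "DD a X"
    proof (cases "pderiv X = 0")
      case True
      then obtain c where "X = [:c:]" using pderiv_iszero by blast
      then show ?thesis using h X by simp
    next
      case False
      then have "order a (pderiv X) \<noteq> 0" using h order_root by blast
      then show ?thesis using o e by simp
    qed
  qed
qed

lemma rsquarefree_DD: "rsquarefree X \<longleftrightarrow> (\<forall>a. \<not> DD a X)"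
  by (simp add: rsquarefree_roots DD_iff)

lemma DD_0[simp]: "DD a 0" by (simp add: DD_def)

lemma DD_root: "DD a X \<Longrightarrow> poly X a = 0" by (simp add: DD_iff)

lemma DD_uniq:
  assumes tu: "t \<noteq> u" and dt: "DD a (A + smult t B)" and du: "DD a (A + smult u B)"
  shows "DD a A \<and> DD a B"
proof -
  have "[:-a,1:]^2 dvd (A + smult t B) - (A + smult u B)"
    using dt du unfolding DD_def by (rule dvd_diff)
  moreover have "(A + smult t B) - (A + smult u B) = smult (t - u) B"
    by (simp add: algebra_simps smult_diff_left)
  ultimately have "[:-a,1:]^2 dvd smult (t - u) B" by simp
  moreover have "t - u \<noteq> 0" using tu by simp
  ultimately have b0: "[:-a,1:]^2 dvd B" by (rule dvd_smult_cancel)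
  then have b: "DD a B" unfolding DD_def .
  have "[:-a,1:]^2 dvd smult t B" using b0 by (rule dvd_smult)
  with dt have "[:-a,1:]^2 dvd (A + smult t B) - smult t B" unfolding DD_def by (rule dvd_diff)
  then have "DD a A" unfolding DD_def by simp
  with b show ?thesis by simp
qed

lemma subsingleton_finite:
  assumes "\<And>x y. x \<in> X \<Longrightarrow> y \<in> X \<Longrightarrow> x = y" shows "finite X"
proof (cases "X = {}")
  case False
  then obtain x where "x \<in> X" by blast
  then have "X \<subseteq> {x}" using assms by blast
  then show ?thesis using finite_subset by blast
qed simp

lemma pencil1:
  fixes A B H :: "complex poly"
  assumes H: "H \<noteq> 0" and EH: "\<And>a. \<not> E a \<Longrightarrow> DD a H"
    and h: "\<And>a. \<not> DD a A \<or> \<not> DD a B \<or> E a"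
  shows "finite {t. \<exists>a. DD a (A + smult t B) \<and> \<not> E a}"
proof -
  have "{t. \<exists>a. DD a (A + smult t B) \<and> \<not> E a} \<subseteq>
     (\<Union>a\<in>{x. poly H x = 0}. {t. DD a (A + smult t B) \<and> \<not> E a})"
  proof clarify
    fix t a assume d: "DD a (A + smult t B)" and e: "\<not> E a"
    have "poly H a = 0" using EH[OF e] by (rule DD_root)
    then show "t \<in> (\<Union>a\<in>{x. poly H x = 0}. {t. DD a (A + smult t B) \<and> \<not> E a})"
      by (intro UN_I[of a]) (simp_all add: d e)
  qed
  moreover have "finite (\<Union>a\<in>{x. poly H x = 0}. {t. DD a (A + smult t B) \<and> \<not> E a})"
  proof (rule finite_UN_I)
    show "finite {x. poly H x = 0}" using poly_roots_finite[OF H] .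
    fix a assume "a \<in> {x. poly H x = 0}"
    show "finite {t. DD a (A + smult t B) \<and> \<not> E a}"
    proof (rule subsingleton_finite)
      fix x y assume x: "x \<in> {t. DD a (A + smult t B) \<and> \<not> E a}" and y: "y \<in> {t. DD a (A + smult t B) \<and> \<not> E a}"
      show "x = y"
      proof (rule ccontr)
        assume "x \<noteq> y"
        moreover have "DD a (A + smult x B)" "DD a (A + smult y B)" using x y by simp_all
        ultimately have "DD a A \<and> DD a B" by (rule DD_uniq)
        moreover have "\<not> E a" using x by simp
        ultimately show False using h[of a] by simp
      qed
    qed
  qed
  ultimately show ?thesis by (rule finite_subset)
qed

lemma proportional:
  fixes A B :: "complex poly"
  assumes B: "B \<noteq> 0" and W: "A * pderiv B = pderiv A * B"
  shows "\<exists>c. A = smult c B"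
proof -
  obtain x0 where x0: "poly B x0 \<noteq> 0" using B poly_all_0_iff_0 by blast
  define c where "c = poly A x0 / poly B x0"
  define C where "C = A - smult c B"
  have WC: "C * pderiv B = pderiv C * B"
    unfolding C_def using W by (simp add: pderiv_diff pderiv_smult algebra_simps)
  have C0: "poly C x0 = 0" unfolding C_def c_def using x0 by simp
  have "C = 0"
  proof (rule ccontr)
    assume C: "C \<noteq> 0"
    have dC: "pderiv C \<noteq> 0"
    proof
      assume "pderiv C = 0"
      then obtain h where "C = [:h:]" using pderiv_iszero by blast
      then show False using C C0 by simp
    qed
    have nz: "pderiv C * B \<noteq> 0" using dC B by simp
    then have nz2: "C * pderiv B \<noteq> 0" using WC by simp
    have "order x0 (C * pderiv B) = order x0 C + order x0 (pderiv B)"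
      using order_mult[OF nz2] .
    moreover have "order x0 (pderiv C * B) = order x0 (pderiv C) + order x0 B"
      using order_mult[OF nz] .
    moreover have "order x0 B = 0" using x0 order_root by blast
    moreover have "order x0 C = Suc (order x0 (pderiv C))" using order_pderiv[OF C C0] .
    ultimately show False using WC by simp
  qed
  then show ?thesis unfolding C_def by auto
qed

lemma pencil2:
  fixes A B :: "complex poly"
  assumes h: "\<And>a. \<not> DD a A \<or> \<not> DD a B"
  shows "finite {t. \<exists>a. DD a (A + smult t B)}"
proof (cases "A * pderiv B - pderiv A * B = 0")
  case False
  define W where "W = A * pderiv B - pderiv A * B"
  have "{t. \<exists>a. DD a (A + smult t B)} \<subseteq> (\<Union>a\<in>{x. poly W x = 0}. {t. DD a (A + smult t B)})"
  proof clarify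
    fix t a assume d: "DD a (A + smult t B)"
    then have "poly A a + t * poly B a = 0" "poly (pderiv A) a + t * poly (pderiv B) a = 0"
      by (auto simp: DD_iff pderiv_add pderiv_smult)
    then have e1: "poly A a = - (t * poly B a)" and e2: "poly (pderiv A) a = - (t * poly (pderiv B) a)"
      by (simp_all add: eq_neg_iff_add_eq_0)
    have "poly W a = poly A a * poly (pderiv B) a - poly (pderiv A) a * poly B a"
      unfolding W_def by simp
    also have "\<dots> = 0" unfolding e1 e2 by (simp add: algebra_simps)
    finally have "poly W a = 0" .
    then show "t \<in> (\<Union>a\<in>{x. poly W x = 0}. {t. DD a (A + smult t B)})"
      by (intro UN_I[of a]) (simp_all add: d)
  qed
  moreover have "finite (\<Union>a\<in>{x. poly W x = 0}. {t. DD a (A + smult t B)})"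
  proof (rule finite_UN_I)
    have "W \<noteq> 0" unfolding W_def using False .
    then show "finite {x. poly W x = 0}" by (rule poly_roots_finite)
    fix a assume "a \<in> {x. poly W x = 0}"
    show "finite {t. DD a (A + smult t B)}"
    proof (rule subsingleton_finite)
      fix x y assume x: "x \<in> {t. DD a (A + smult t B)}" and y: "y \<in> {t. DD a (A + smult t B)}"
      show "x = y"
      proof (rule ccontr)
        assume "x \<noteq> y"
        moreover have "DD a (A + smult x B)" "DD a (A + smult y B)" using x y by simp_all
        ultimately have "DD a A \<and> DD a B" by (rule DD_uniq)
        then show False using h by auto
      qed
    qed
  qed
  ultimately show ?thesis by (rule finite_subset)
next
  case True
  show ?thesis
  proof (cases "B = 0")
    case True
    then show ?thesis using h by simp
  next
    case False
    then obtain c where c: "A = smult c B" using proportional True by auto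
    have "{t. \<exists>a. DD a (A + smult t B)} \<subseteq> {-c}"
    proof clarify
      fix t a assume d: "DD a (A + smult t B)"
      have e: "A + smult t B = smult (c + t) B" using c by (simp add: smult_add_left)
      show "t = -c"
      proof (rule ccontr)
        assume "t \<noteq> -c"
        then have "c + t \<noteq> 0" by (metis add_eq_0_iff2 minus_unique)
        then have "DD a B" using d e dvd_smult_cancel unfolding DD_def by metis
        moreover then have "DD a A" using c unfolding DD_def by (simp add: dvd_smult)
        ultimately show False using h by blast
      qed
    qed
    then show ?thesis by (rule finite_subset) simp
  qed
qed



lemma gcd_deg_rsqf:
  fixes f :: "complex poly"
  assumes f: "f \<noteq> 0"
  shows "degree (gcd f (pderiv f)) = 0 \<longleftrightarrow> rsquarefree f"
proof
  assume deg: "degree (gcd f (pderiv f)) = 0"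
  show "rsquarefree f" unfolding rsquarefree_roots
  proof (intro allI notI)
    fix a assume h: "poly f a = 0 \<and> poly (pderiv f) a = 0"
    then have "[:-a,1:] dvd f" "[:-a,1:] dvd pderiv f" using poly_eq_0_iff_dvd by blast+
    then have dv: "[:-a,1:] dvd gcd f (pderiv f)" by (rule gcd_greatest)
    have "gcd f (pderiv f) \<noteq> 0" using f by simp
    from dvd_imp_degree_le[OF dv this] deg show False by simp
  qed
next
  assume r: "rsquarefree f"
  show "degree (gcd f (pderiv f)) = 0"
  proof (rule ccontr)
    assume "degree (gcd f (pderiv f)) \<noteq> 0"
    then have "\<not> constant (poly (gcd f (pderiv f)))" by (simp add: constant_degree)
    then obtain z where z: "poly (gcd f (pderiv f)) z = 0" using fundamental_theorem_of_algebra by blast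
    have "[:-z,1:] dvd gcd f (pderiv f)" using z poly_eq_0_iff_dvd by blast
    then have "[:-z,1:] dvd f" "[:-z,1:] dvd pderiv f" using dvd_trans by blast+
    then have "poly f z = 0" "poly (pderiv f) z = 0" using poly_eq_0_iff_dvd by blast+
    then show False using r unfolding rsquarefree_roots by blast
  qed
qed

lemma pencil_step:
  fixes p :: "'n \<Rightarrow> complex poly" and A :: "complex poly"
  assumes ih: "\<And>a. \<not> DD a A \<or> (\<exists>m. m \<notin> S \<and> \<not> DD a (p m))"
  shows "finite {t. \<exists>a. DD a (A + smult t (p j)) \<and> \<not> (\<exists>m. m \<notin> insert j S \<and> \<not> DD a (p m))}"
proof -
  define E where "E a \<longleftrightarrow> (\<exists>m. m \<notin> insert j S \<and> \<not> DD a (p m))" for a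
  have h: "\<not> DD a A \<or> \<not> DD a (p j) \<or> E a" for a
  proof -
    from ih[of a] consider "\<not> DD a A" | m where "m \<notin> S" "\<not> DD a (p m)" by blast
    then show ?thesis
    proof cases
      case 2
      then show ?thesis by (cases "m = j") (auto simp: E_def)
    qed simp
  qed
  show ?thesis
  proof (cases "\<exists>m. m \<notin> insert j S \<and> p m \<noteq> 0")
    case True
    then obtain m where m: "m \<notin> insert j S" "p m \<noteq> 0" by blast
    have "finite {t. \<exists>a. DD a (A + smult t (p j)) \<and> \<not> E a}"
    proof (rule pencil1[OF m(2)])
      show "DD a (p m)" if "\<not> E a" for a using that m(1) unfolding E_def by blast
      show "\<not> DD a A \<or> \<not> DD a (p j) \<or> E a" for a by (rule h)
    qed
    then show ?thesis unfolding E_def .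
  next
    case False
    then have nE: "\<not> E a" for a unfolding E_def by auto
    have "finite {t. \<exists>a. DD a (A + smult t (p j))}"
      by (rule pencil2) (use h nE in blast)
    then show ?thesis unfolding E_def[symmetric] using nE by simp
  qed
qed

lemma exists_good:
  fixes p :: "'n::finite \<Rightarrow> complex poly" and d :: nat
  assumes hyp: "\<And>a. \<exists>i. \<not> DD a (p i)"
  shows "\<exists>c. (\<forall>a. \<not> DD a (\<Sum>i\<in>UNIV. smult (c i) (p i))) \<and>
     (coeff (\<Sum>i\<in>UNIV. smult (c i) (p i)) d \<noteq> 0 \<or> (\<forall>i. coeff (p i) d = 0))"
proof -
  have "finite S \<Longrightarrow> \<exists>c. (\<forall>a. \<not> DD a (\<Sum>i\<in>S. smult (c i) (p i)) \<or> (\<exists>m. m \<notin> S \<and> \<not> DD a (p m))) \<and>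
     (coeff (\<Sum>i\<in>S. smult (c i) (p i)) d \<noteq> 0 \<or> (\<forall>i\<in>S. coeff (p i) d = 0))" for S
  proof (induction S rule: finite_induct)
    case empty
    show ?case using hyp by simp
  next
    case (insert j S)
    from insert.IH obtain c where
      c1: "\<And>a. \<not> DD a (\<Sum>i\<in>S. smult (c i) (p i)) \<or> (\<exists>m. m \<notin> S \<and> \<not> DD a (p m))" and
      c2: "coeff (\<Sum>i\<in>S. smult (c i) (p i)) d \<noteq> 0 \<or> (\<forall>i\<in>S. coeff (p i) d = 0)" by blast
    define A where "A = (\<Sum>i\<in>S. smult (c i) (p i))"
    define B where "B = p j"
    define T1 where "T1 = {t. \<exists>a. DD a (A + smult t B) \<and> \<not> (\<exists>m. m \<notin> insert j S \<and> \<not> DD a (p m))}"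
    have fT1: "finite T1" unfolding T1_def B_def by (rule pencil_step) (use c1 A_def in blast)
    define T2 where "T2 = (if coeff A d = 0 \<and> coeff B d = 0 then {} else {t. coeff A d + t * coeff B d = 0})"
    have fT2: "finite T2"
    proof (cases "coeff A d = 0 \<and> coeff B d = 0")
      case True then show ?thesis unfolding T2_def by simp
    next
      case False
      have "finite {t. coeff A d + t * coeff B d = 0}"
      proof (rule subsingleton_finite)
        fix x y assume x: "x \<in> {t. coeff A d + t * coeff B d = 0}" and y: "y \<in> {t. coeff A d + t * coeff B d = 0}"
        show "x = y"
        proof (rule ccontr)
          assume xy: "x \<noteq> y"
          have "(x - y) * coeff B d = (coeff A d + x * coeff B d) - (coeff A d + y * coeff B d)"
            by (simp add: algebra_simps)
          also have "\<dots> = 0" using x y by simp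
          finally have "(x - y) * coeff B d = 0" .
          then have "coeff B d = 0" using xy by simp
          moreover have "coeff A d + x * coeff B d = 0" using x by simp
          ultimately have "coeff A d = 0" by simp
          then show False using False \<open>coeff B d = 0\<close> by simp
        qed
      qed
      then show ?thesis unfolding T2_def using False by simp
    qed
    obtain t where t: "t \<notin> T1 \<union> T2"
      using ex_new_if_finite[OF infinite_UNIV_char_0, of "T1 \<union> T2"] fT1 fT2 by blast
    define c' where "c' = c(j := t)"
    have sum_eq: "(\<Sum>i\<in>insert j S. smult (c' i) (p i)) = A + smult t B"
    proof -
      have "(\<Sum>i\<in>insert j S. smult (c' i) (p i)) = smult (c' j) (p j) + (\<Sum>i\<in>S. smult (c' i) (p i))"
        using insert.hyps by (simp add: sum.insert)
      also have "(\<Sum>i\<in>S. smult (c' i) (p i)) = A"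
        unfolding A_def c'_def using insert.hyps by (intro sum.cong) auto
      finally show ?thesis unfolding c'_def B_def by simp
    qed
    have P1: "\<not> DD a (A + smult t B) \<or> (\<exists>m. m \<notin> insert j S \<and> \<not> DD a (p m))" for a
      using t unfolding T1_def by blast
    have P2: "coeff (A + smult t B) d \<noteq> 0 \<or> (\<forall>i\<in>insert j S. coeff (p i) d = 0)"
    proof (cases "coeff A d = 0 \<and> coeff B d = 0")
      case True
      then have "coeff A d = 0" "coeff (p j) d = 0" unfolding B_def by auto
      moreover have "\<forall>i\<in>S. coeff (p i) d = 0" using c2 \<open>coeff A d = 0\<close> unfolding A_def by blast
      ultimately show ?thesis by simp
    next
      case False
      then have "T2 = {t. coeff A d + t * coeff B d = 0}" unfolding T2_def by simp
      then have "t \<notin> {t. coeff A d + t * coeff B d = 0}" using t by simp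
      then show ?thesis by simp
    qed
    show ?case
      by (rule exI[of _ c']) (use P1 P2 sum_eq in simp)
  qed
  from this[of UNIV] show ?thesis by simp
qed



lemma polyfun_sum:
  assumes "finite A" "\<And>a. a \<in> A \<Longrightarrow> polyfun (f a)"
  shows "polyfun (\<lambda>x. \<Sum>a\<in>A. f a x)"
  using assms
proof (induction A rule: finite_induct)
  case empty
  then show ?case using polyfun.const[of 0] by simp
next
  case (insert a A)
  have "polyfun (\<lambda>x. f a x + (\<Sum>a\<in>A. f a x))"
    by (rule polyfun.add) (use insert in auto)
  then show ?case using insert.hyps by simp
qed

lemma polyfun_prod:
  assumes "finite A" "\<And>a. a \<in> A \<Longrightarrow> polyfun (f a)"
  shows "polyfun (\<lambda>x. \<Prod>a\<in>A. f a x)"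
  using assms
proof (induction A rule: finite_induct)
  case empty
  then show ?case using polyfun.const[of 1] by simp
next
  case (insert a A)
  have "polyfun (\<lambda>x. f a x * (\<Prod>a\<in>A. f a x))"
    by (rule polyfun.mult) (use insert in auto)
  then show ?case using insert.hyps by simp
qed

lemma polyfun_if: "polyfun f \<Longrightarrow> polyfun g \<Longrightarrow> polyfun (\<lambda>x. if P then f x else g x)"
  by (cases P) auto

lemma polyfun_coeffF:
  fixes p :: "'n::finite \<Rightarrow> complex poly"
  shows "polyfun (\<lambda>s. coeff (\<Sum>i\<in>UNIV. smult (s $ i) (p i)) k)"
proof -
  have "polyfun (\<lambda>s. \<Sum>i\<in>UNIV. s $ i * coeff (p i) k)"
    by (rule polyfun_sum) (auto intro: polyfun.mult polyfun.coord polyfun.const)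
  then show ?thesis by (simp add: coeff_sum)
qed

lemma polyfun_coeffF':
  fixes p :: "'n::finite \<Rightarrow> complex poly"
  shows "polyfun (\<lambda>s. coeff (pderiv (\<Sum>i\<in>UNIV. smult (s $ i) (p i))) k)"
proof -
  have "polyfun (\<lambda>s. of_nat (Suc k) * coeff (\<Sum>i\<in>UNIV. smult (s $ i) (p i)) (Suc k))"
    by (rule polyfun.mult) (auto intro: polyfun.const polyfun_coeffF)
  then show ?thesis by (simp add: coeff_pderiv)
qed

lemma polyfun_res:
  fixes p :: "'n::finite \<Rightarrow> complex poly"
  shows "polyfun (\<lambda>s. resultant_sub m n (\<Sum>i\<in>UNIV. smult (s $ i) (p i)) (pderiv (\<Sum>i\<in>UNIV. smult (s $ i) (p i))))"
proof -
  let ?F = "\<lambda>s. (\<Sum>i\<in>UNIV. smult (s $ i) (p i))"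
  let ?M = "\<lambda>s. sylvester_mat_sub m n (?F s) (pderiv (?F s))"
  have ent: "polyfun (\<lambda>s. ?M s $$ (i, j))" if "i < m + n" "j < m + n" for i j
  proof -
    have eq: "(\<lambda>s. ?M s $$ (i, j)) = (\<lambda>s. if i < n then
       if i \<le> j \<and> j - i \<le> m then coeff (?F s) (m + i - j) else 0
     else if i - n \<le> j \<and> j \<le> i then coeff (pderiv (?F s)) (i-j) else 0)"
      by (rule ext) (rule sylvester_mat_sub_index[OF that])
    show ?thesis unfolding eq
      by (intro polyfun_if polyfun_coeffF polyfun_coeffF' polyfun.const)
  qed
  have "polyfun (\<lambda>s. \<Sum>\<pi> | \<pi> permutes {0..<m+n}. of_int (sign \<pi>) * (\<Prod>i = 0..<m+n. ?M s $$ (i, \<pi> i)))"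
  proof (rule polyfun_sum)
    show "finite {\<pi>. \<pi> permutes {0..<m+n}}" by (rule finite_permutations) simp
    fix \<pi> assume "\<pi> \<in> {\<pi>. \<pi> permutes {0..<m+n}}"
    then have pp: "\<pi> permutes {0..<m+n}" by simp
    show "polyfun (\<lambda>s. of_int (sign \<pi>) * (\<Prod>i = 0..<m+n. ?M s $$ (i, \<pi> i)))"
    proof (rule polyfun.mult)
      show "polyfun (\<lambda>s. of_int (sign \<pi>))" by (rule polyfun.const)
      show "polyfun (\<lambda>s. \<Prod>i = 0..<m+n. ?M s $$ (i, \<pi> i))"
      proof (rule polyfun_prod)
        fix i assume i: "i \<in> {0..<m+n}"
        then have "\<pi> i \<in> {0..<m+n}" using pp by (simp add: permutes_in_image)
        then show "polyfun (\<lambda>s. ?M s $$ (i, \<pi> i))" using i ent by simp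
      qed simp
    qed
  qed
  then show ?thesis unfolding resultant_sub_def Determinant.det_def by simp
qed

theorem lemmaA1:
  fixes p :: "'n::finite \<Rightarrow> complex poly"
  assumes "rsquarefree (Gcd (range p))"
  shows "\<exists>\<Omega>. generic \<Omega> \<and> (\<forall>s\<in>\<Omega>. rsquarefree (\<Sum>i\<in>UNIV. smult (s $ i) (p i)))"
proof -
  define F where "F s = (\<Sum>i\<in>UNIV. smult (s $ i) (p i))" for s :: "complex^'n"
  define d where "d = Max (range (\<lambda>i. degree (p i)))"
  define g where "g s = coeff (F s) d * resultant_sub d (d - 1) (F s) (pderiv (F s))" for s
  have pg: "polyfun g"
    unfolding g_def F_def by (intro polyfun.mult polyfun_coeffF polyfun_res)
  have degle: "degree (F s) \<le> d" for s
    unfolding F_def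
  proof (rule degree_sum_le)
    fix i :: 'n
    have "degree (p i) \<le> d" unfolding d_def by (rule Max_ge) auto
    then show "degree (smult (s $ i) (p i)) \<le> d" using degree_smult_le order_trans by blast
  qed simp
  have key: "resultant_sub d (d - 1) (F s) (pderiv (F s)) \<noteq> 0 \<longleftrightarrow> rsquarefree (F s)"
    if L: "coeff (F s) d \<noteq> 0" for s
  proof -
    have dF: "degree (F s) = d" using degle[of s] le_degree[OF L] by simp
    have F0: "F s \<noteq> 0" using L by auto
    have "resultant_sub d (d - 1) (F s) (pderiv (F s)) = resultant (F s) (pderiv (F s))"
      using dF by (simp add: resultant_sub degree_pderiv)
    moreover have "resultant (F s) (pderiv (F s)) = 0 \<longleftrightarrow> degree (gcd (F s) (pderiv (F s))) \<noteq> 0"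
      by (rule resultant_0_gcd)
    ultimately show ?thesis using gcd_deg_rsqf[OF F0] by simp
  qed
  have G0: "Gcd (range p) \<noteq> 0" using assms by (simp add: rsquarefree_def)
  have hyp: "\<exists>i. \<not> DD a (p i)" for a
  proof (rule ccontr)
    assume "\<not> (\<exists>i. \<not> DD a (p i))"
    then have "[:-a,1:]^2 dvd Gcd (range p)" unfolding DD_def by (intro Gcd_greatest) auto
    then have "DD a (Gcd (range p))" unfolding DD_def .
    then show False using assms rsquarefree_DD by blast
  qed
  have nz: "\<not> (\<forall>i. coeff (p i) d = 0)"
  proof
    assume allz: "\<forall>i. coeff (p i) d = 0"
    obtain i0 where i0: "p i0 \<noteq> 0"
    proof (rule ccontr)
      assume "\<not> thesis"
      then have "\<forall>i. p i = 0" using that by blast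
      then have "range p = {0}" by auto
      then show False using G0 by simp
    qed
    have "d \<in> range (\<lambda>i. degree (p i))" unfolding d_def by (rule Max_in) auto
    then obtain i1 where i1: "degree (p i1) = d" by auto
    show False
    proof (cases "p i1 = 0")
      case False
      then have "coeff (p i1) (degree (p i1)) \<noteq> 0" by simp
      then have "coeff (p i1) d \<noteq> 0" using i1 by simp
      then show False using allz by simp
    next
      case True
      then have "d = 0" using i1 by simp
      moreover have "degree (p i0) \<le> d" unfolding d_def by (rule Max_ge) auto
      ultimately have "degree (p i0) = d" by simp
      moreover have "coeff (p i0) (degree (p i0)) \<noteq> 0" using i0 by simp
      ultimately have "coeff (p i0) d \<noteq> 0" by simp
      then show False using allz by simp
    qed
  qed
  obtain c where c1: "\<forall>a. \<not> DD a (\<Sum>i\<in>UNIV. smult (c i) (p i))"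
    and c2: "coeff (\<Sum>i\<in>UNIV. smult (c i) (p i)) d \<noteq> 0"
    using exists_good[of p d, OF hyp] nz by blast
  define s0 :: "complex^'n" where "s0 = (\<chi> i. c i)"
  have Fs0: "F s0 = (\<Sum>i\<in>UNIV. smult (c i) (p i))" unfolding F_def s0_def by simp
  have "g s0 \<noteq> 0"
  proof -
    have L: "coeff (F s0) d \<noteq> 0" using c2 Fs0 by simp
    have "rsquarefree (F s0)" using c1 Fs0 rsquarefree_DD by simp
    then show ?thesis unfolding g_def using key[OF L] L by simp
  qed
  define A where "A = {s. g s = 0}"
  have alg: "algebraic_set A"
    unfolding algebraic_set_def A_def by (rule exI[of _ "{g}"]) (simp add: pg)
  have "A \<noteq> UNIV" using \<open>g s0 \<noteq> 0\<close> unfolding A_def by blast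
  then have "generic (- A)" unfolding generic_def using alg by blast
  moreover have "rsquarefree (F s)" if "s \<in> - A" for s
  proof -
    from that have "g s \<noteq> 0" unfolding A_def by simp
    then have L: "coeff (F s) d \<noteq> 0" and R: "resultant_sub d (d - 1) (F s) (pderiv (F s)) \<noteq> 0"
      unfolding g_def by auto
    show ?thesis using key[OF L] R by simp
  qed
  ultimately show ?thesis unfolding F_def by blast
qed

end
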